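(* Let $u$ be a fast decreasing distribution on $\mathbb R^D$ (so that it defines a linear functional on $\mathbb C[\boldsymbol x]$), let $\mathcal Q_2\in\mathbb C[\boldsymbol x]$ have complex zero set $Z(\mathcal Q_2)$ disjoint from $\operatorname{supp}u$, and let $\check u$ be a linear functional on $\mathbb C[\boldsymbol x]$ with $\mathcal Q_2\check u=u$. Assume $u$ and $\check u$ are quasi-definite, with quasi-tau matrices $H_{[l]}$ and $\check H_{[l]}$ respectively, and let $\check{\boldsymbol J}=(\check J_1,\dots,\check J_D)$ with $\check J_a=\check S\Lambda_a\check S^{-1}$. Then for every $k\ge1$ $$\det\big((\mathcal Q_2(\check{\boldsymbol J}))^{[k]}\big)=\prod_{l=0}^{k-1}\frac{\det H_{[l]}}{\det\check H_{[l]}},$$ and in particular $(\mathcal Q_2(\check{\boldsymbol J}))^{[k]}$ is nonsingular.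
   Context: $D\ge1$, $\boldsymbol x=(x_1,\dots,x_D)^\top$, $\mathbb C[\boldsymbol x]$ complex polynomials. For $k\in\mathbb Z_+$, $[k]=\{\boldsymbol\alpha\in\mathbb Z_+^D:|\boldsymbol\alpha|=k\}$, $|[k]|=\binom{D+k-1}{k}$. Multi-indices are ordered by graded lexicographic order; $\chi(\boldsymbol x)$ is the semi-infinite column vector of all monomials $\boldsymbol x^{\boldsymbol\alpha}$ in this order, with blocks $\chi_{[k]}=(\boldsymbol x^{\boldsymbol\alpha})_{\boldsymbol\alpha\in[k]}$. Semi-infinite matrices are partitioned accordingly into blocks $A_{[k],[l]}\in\mathbb C^{|[k]|\times|[l]|}$, and $A^{[k]}$ denotes the truncation to block rows and columns $0,\dots,k-1$. Spectral matrices: $(\Lambda_a)_{\boldsymbol\alpha,\boldsymbol\beta}=\delta_{\boldsymbol\alpha+\boldsymbol e_a,\boldsymbol\beta}$, $a=1,\dots,D$; for a polynomial $Q$, $Q(\boldsymbol\Lambda)=Q(\Lambda_1,\dots,\Lambda_D)$ and similarly $Q(\check{\boldsymbol J})$. For a linear functional $u$, $\langle Qu,P\rangle:=\langle u,QP\rangle$; its moment matrix is $G=\langle u,\chi\chi^\top\rangle$ (entrywise); $u$ is quasi-definite if $\det G^{[k]}\neq0$ for all $k\ge1$, and then $G=S^{-1}HS^{-\top}$ with $S$ block lower unitriangular and $H$ block diagonal with blocks $H_{[k]}$ (quasi-tau matrices). The same notation with a check refers to $\check u$. *)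

theory Defs
  imports Complex_Main "HOL-Library.Poly_Mapping" "HOL-Combinatorics.Permutations"
begin

(* Multi-indices in D = CARD('n) variables, polynomials, semi-infinite matrices
   indexed by multi-indices. *)
type_synonym 'n mi = "'n \<Rightarrow>\<^sub>0 nat"
type_synonym 'n mpoly = "'n mi \<Rightarrow>\<^sub>0 complex"
type_synonym 'n smat = "'n mi \<Rightarrow> 'n mi \<Rightarrow> complex"

definition mdeg :: "('n::finite) mi \<Rightarrow> nat" where
  "mdeg \<alpha> = (\<Sum>a\<in>UNIV. Poly_Mapping.lookup \<alpha> a)"

definition monomial :: "'n mi \<Rightarrow> 'n mpoly" where
  "monomial \<alpha> = Poly_Mapping.single \<alpha> 1"

definition cscale :: "complex \<Rightarrow> 'n mpoly \<Rightarrow> 'n mpoly" where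
  "cscale c P = Poly_Mapping.single 0 c * P"

definition lin_functional :: "('n mpoly \<Rightarrow> complex) \<Rightarrow> bool" where
  "lin_functional u \<longleftrightarrow> (\<forall>P Q. u (P + Q) = u P + u Q) \<and> (\<forall>c P. u (cscale c P) = c * u P)"

definition moment_matrix :: "('n mpoly \<Rightarrow> complex) \<Rightarrow> 'n smat" where
  "moment_matrix u \<alpha> \<beta> = u (monomial \<alpha> * monomial \<beta>)"

definition det_on :: "'a set \<Rightarrow> ('a \<Rightarrow> 'a \<Rightarrow> complex) \<Rightarrow> complex" where
  "det_on I A = (\<Sum>p | p permutes I. of_int (sign p) * (\<Prod>i\<in>I. A i (p i)))"

(* index set of the truncation A^[k]: block rows/columns 0..k-1 *)
definition trunc_idx :: "nat \<Rightarrow> ('n::finite) mi set" where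
  "trunc_idx k = {\<alpha>. mdeg \<alpha> < k}"

definition block_idx :: "nat \<Rightarrow> ('n::finite) mi set" where
  "block_idx l = {\<alpha>. mdeg \<alpha> = l}"

definition quasi_definite :: "(('n::finite) mpoly \<Rightarrow> complex) \<Rightarrow> bool" where
  "quasi_definite u \<longleftrightarrow> (\<forall>k\<ge>1. det_on (trunc_idx k) (moment_matrix u) \<noteq> 0)"

(* product of semi-infinite matrices; well defined when the left factor has finite rows *)
definition mmult :: "'n smat \<Rightarrow> 'n smat \<Rightarrow> 'n smat" where
  "mmult A B i j = (\<Sum>l\<in>{l. A i l \<noteq> 0}. A i l * B l j)"

definition mtrans :: "'n smat \<Rightarrow> 'n smat" where
  "mtrans A i j = A j i"

definition mident :: "'n smat" where
  "mident i j = (if i = j then 1 else 0)"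

definition block_lower_unitriangular :: "('n::finite) smat \<Rightarrow> bool" where
  "block_lower_unitriangular S \<longleftrightarrow>
     (\<forall>\<alpha> \<beta>. mdeg \<alpha> < mdeg \<beta> \<longrightarrow> S \<alpha> \<beta> = 0) \<and>
     (\<forall>\<alpha> \<beta>. mdeg \<alpha> = mdeg \<beta> \<longrightarrow> S \<alpha> \<beta> = mident \<alpha> \<beta>)"

definition block_diagonal :: "('n::finite) smat \<Rightarrow> bool" where
  "block_diagonal H \<longleftrightarrow> (\<forall>\<alpha> \<beta>. mdeg \<alpha> \<noteq> mdeg \<beta> \<longrightarrow> H \<alpha> \<beta> = 0)"

definition spectral :: "'n \<Rightarrow> 'n smat" where
  "spectral a \<alpha> \<beta> = (if \<beta> = \<alpha> + Poly_Mapping.single a 1 then 1 else 0)"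

fun mpow :: "'n smat \<Rightarrow> nat \<Rightarrow> 'n smat" where
  "mpow A 0 = mident"
| "mpow A (Suc n) = mmult A (mpow A n)"

definition mat_monom :: "('n::{finite,linorder} \<Rightarrow> 'n smat) \<Rightarrow> 'n mi \<Rightarrow> 'n smat" where
  "mat_monom J \<alpha> = foldr (\<lambda>a M. mmult (mpow (J a) (Poly_Mapping.lookup \<alpha> a)) M) (sorted_list_of_set UNIV) mident"

definition mat_poly_eval :: "('n::{finite,linorder}) mpoly \<Rightarrow> ('n \<Rightarrow> 'n smat) \<Rightarrow> 'n smat" where
  "mat_poly_eval Q J i j = (\<Sum>\<alpha>\<in>Poly_Mapping.keys Q. Poly_Mapping.lookup Q \<alpha> * mat_monom J \<alpha> i j)"

definition jacobi :: "'n smat \<Rightarrow> 'n smat \<Rightarrow> 'n \<Rightarrow> 'n smat" where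
  "jacobi S Sinv a = mmult (mmult S (spectral a)) Sinv"

end

theory Submission
  imports Defs "Jordan_Normal_Form.Determinant"
begin

definition tm :: "(nat \<Rightarrow> 'a) \<Rightarrow> nat \<Rightarrow> ('a \<Rightarrow> 'a \<Rightarrow> complex) \<Rightarrow> complex mat" where
  "tm f n A = mat n n (\<lambda>(i,j). A (f i) (f j))"

lemma tm_carrier[simp]: "tm f n A \<in> carrier_mat n n"
  by (simp add: tm_def)

lemma det_on_tm:
  assumes f: "bij_betw f {0..<n} I"
  shows "det_on I A = det (tm f n A)"
proof -
  have inj: "inj_on f {0..<n}" by (rule bij_betw_imp_inj_on[OF f])
  have fI: "f ` {0..<n} = I" by (rule bij_betw_imp_surj_on[OF f])
  have gbij: "bij_betw (inv_into {0..<n} f) I {0..<n}" by (rule bij_betw_inv_into[OF f])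
  have "det (tm f n A) = (\<Sum>p\<in>{p. p permutes {0..<n}}. of_int (sign p) * (\<Prod>i=0..<n. tm f n A $$ (i, p i)))"
    by (rule det_def'[OF tm_carrier])
  also have "\<dots> = (\<Sum>p\<in>{p. p permutes {0..<n}}. of_int (sign p) * (\<Prod>i=0..<n. A (f i) (f (p i))))"
  proof (rule sum.cong[OF refl])
    fix p assume "p \<in> {p. p permutes {0..<n}}"
    hence p: "p permutes {0..<n}" by simp
    have "(\<Prod>i=0..<n. tm f n A $$ (i, p i)) = (\<Prod>i=0..<n. A (f i) (f (p i)))"
    proof (rule prod.cong[OF refl])
      fix i assume i: "i \<in> {0..<n}"
      hence "p i \<in> {0..<n}" using permutes_in_image[OF p] by simp
      thus "tm f n A $$ (i, p i) = A (f i) (f (p i))" using i by (simp add: tm_def)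
    qed
    thus "of_int (sign p) * (\<Prod>i=0..<n. tm f n A $$ (i, p i)) = of_int (sign p) * (\<Prod>i=0..<n. A (f i) (f (p i)))"
      by simp
  qed
  also have "\<dots> = det_on I A"
    unfolding det_on_def
  proof (rule sum.reindex_bij_witness[where i = "map_permutation I (inv_into {0..<n} f)"
        and j = "map_permutation {0..<n} f"])
    fix p assume "p \<in> {p. p permutes {0..<n}}"
    hence p: "p permutes {0..<n}" by simp
    show "map_permutation I (inv_into {0..<n} f) (map_permutation {0..<n} f p) = p"
      by (rule map_permutation_compose_inv[OF f p], rule inv_into_f_f[OF inj])
    show "map_permutation {0..<n} f p \<in> {p. p permutes I}"
      using map_permutation_permutes[OF f p] by simp
    have "(\<Prod>x\<in>I. A x (map_permutation {0..<n} f p x)) = (\<Prod>i\<in>{0..<n}. A (f i) (map_permutation {0..<n} f p (f i)))"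
      by (rule prod.reindex_bij_betw[OF f, symmetric])
    also have "\<dots> = (\<Prod>i=0..<n. A (f i) (f (p i)))"
    proof (rule prod.cong[OF refl])
      fix i assume i: "i \<in> {0..<n}"
      show "A (f i) (map_permutation {0..<n} f p (f i)) = A (f i) (f (p i))"
        by (simp only: map_permutation_apply[OF inj i])
    qed
    finally have pr: "(\<Prod>x\<in>I. A x (map_permutation {0..<n} f p x)) = (\<Prod>i=0..<n. A (f i) (f (p i)))" .
    have sg: "sign (map_permutation {0..<n} f p) = sign p"
      by (rule sign_map_permutation[OF inj p]) simp
    show "of_int (sign (map_permutation {0..<n} f p)) * (\<Prod>x\<in>I. A x (map_permutation {0..<n} f p x))
       = of_int (sign p) * (\<Prod>i=0..<n. A (f i) (f (p i)))"
      by (simp only: pr sg)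
  next
    fix q assume "q \<in> {p. p permutes I}"
    hence q: "q permutes I" by simp
    show "map_permutation {0..<n} f (map_permutation I (inv_into {0..<n} f) q) = q"
      by (rule map_permutation_compose_inv[OF gbij q], rule f_inv_into_f, simp add: fI)
    show "map_permutation I (inv_into {0..<n} f) q \<in> {p. p permutes {0..<n}}"
      using map_permutation_permutes[OF gbij q] by simp
  qed
  finally show ?thesis by simp
qed


lemma tm_mult:
  assumes f: "bij_betw f {0..<n} I"
  shows "tm f n X * tm f n Y = tm f n (\<lambda>i j. \<Sum>l\<in>I. X i l * Y l j)"
proof (rule eq_matI)
  fix i j assume "i < dim_row (tm f n (\<lambda>i j. \<Sum>l\<in>I. X i l * Y l j))" "j < dim_col (tm f n (\<lambda>i j. \<Sum>l\<in>I. X i l * Y l j))"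
  hence ij: "i < n" "j < n" by (auto simp: tm_def)
  have "(tm f n X * tm f n Y) $$ (i,j) = (\<Sum>l=0..<n. X (f i) (f l) * Y (f l) (f j))"
    using ij by (simp add: tm_def scalar_prod_def)
  also have "\<dots> = (\<Sum>l\<in>I. X (f i) l * Y l (f j))"
    by (rule sum.reindex_bij_betw[OF f])
  finally show "(tm f n X * tm f n Y) $$ (i,j) = tm f n (\<lambda>i j. \<Sum>l\<in>I. X i l * Y l j) $$ (i,j)"
    using ij by (simp add: tm_def)
qed (auto simp: tm_def)

lemma tm_cong:
  assumes f: "bij_betw f {0..<n} I" and "\<And>i j. i \<in> I \<Longrightarrow> j \<in> I \<Longrightarrow> A i j = B i j"
  shows "tm f n A = tm f n B"
  unfolding tm_def using assms(2) bij_betwE[OF f] by (intro eq_matI) auto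

lemma tm_trans:
  "tm f n (\<lambda>i j. A j i) = transpose_mat (tm f n A)"
  unfolding tm_def by (intro eq_matI) auto

lemma det_on_cong:
  assumes "finite I" "\<And>i j. i \<in> I \<Longrightarrow> j \<in> I \<Longrightarrow> A i j = B i j"
  shows "det_on I A = det_on I B"
  unfolding det_on_def using assms(2)
  by (intro sum.cong refl arg_cong2[where f="(*)"] prod.cong) (auto simp: permutes_in_image)

lemma det_on_transpose:
  assumes "finite I"
  shows "det_on I (\<lambda>i j. A j i) = det_on I A"
proof -
  obtain f where f: "bij_betw f {0..<card I} I" using ex_bij_betw_nat_finite[OF assms] by blast
  have "det_on I (\<lambda>i j. A j i) = det (tm f (card I) (\<lambda>i j. A j i))" by (rule det_on_tm[OF f])
  also have "\<dots> = det (transpose_mat (tm f (card I) A))" by (simp only: tm_trans[of f "card I" A])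
  also have "\<dots> = det (tm f (card I) A)" by (rule det_transpose[of _ "card I"]) simp
  also have "\<dots> = det_on I A" by (rule det_on_tm[OF f, symmetric])
  finally show ?thesis .
qed

lemma det_on_mult:
  assumes "finite I"
  shows "det_on I (\<lambda>i j. \<Sum>l\<in>I. X i l * Y l j) = det_on I X * det_on I Y"
proof -
  obtain f where f: "bij_betw f {0..<card I} I" using ex_bij_betw_nat_finite[OF assms] by blast
  have "det_on I (\<lambda>i j. \<Sum>l\<in>I. X i l * Y l j) = det (tm f (card I) (\<lambda>i j. \<Sum>l\<in>I. X i l * Y l j))"
    by (rule det_on_tm[OF f])
  also have "\<dots> = det (tm f (card I) X * tm f (card I) Y)" by (simp only: tm_mult[OF f])
  also have "\<dots> = det (tm f (card I) X) * det (tm f (card I) Y)" by (rule det_mult[of _ "card I"]) auto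
  also have "\<dots> = det_on I X * det_on I Y" by (simp only: det_on_tm[OF f])
  finally show ?thesis .
qed

lemma det_on_ident:
  assumes "finite I"
  shows "det_on I mident = 1"
proof -
  obtain f where f: "bij_betw f {0..<card I} I" using ex_bij_betw_nat_finite[OF assms] by blast
  have inj: "inj_on f {0..<card I}" by (rule bij_betw_imp_inj_on[OF f])
  have "tm f (card I) mident = 1\<^sub>m (card I)"
    unfolding tm_def mident_def by (intro eq_matI) (auto dest: inj_onD[OF inj])
  thus ?thesis by (simp add: det_on_tm[OF f])
qed

lemma det_on_empty: "det_on {} A = 1"
  unfolding det_on_def by (simp add: permutes_empty)

lemma det_on_split:
  assumes fA: "finite A" and fB: "finite B" and disj: "A \<inter> B = {}"
    and z: "\<And>i j. i \<in> A \<Longrightarrow> j \<in> B \<Longrightarrow> M i j = 0"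
  shows "det_on (A \<union> B) M = det_on A M * det_on B M"
proof -
  obtain fa where fa: "bij_betw fa {0..<card A} A" using ex_bij_betw_nat_finite[OF fA] by blast
  obtain fb where fb: "bij_betw fb {0..<card B} B" using ex_bij_betw_nat_finite[OF fB] by blast
  define a where "a = card A"
  define b where "b = card B"
  define f where "f i = (if i < a then fa i else fb (i - a))" for i
  have fbij: "bij_betw f {0..<a+b} (A \<union> B)"
  proof -
    have "bij_betw f ({0..<a} \<union> {a..<a+b}) (A \<union> B)"
    proof (rule bij_betw_combine[OF _ _ disj])
      show "bij_betw f {0..<a} A" using fa unfolding a_def
        by (rule bij_betw_cong[THEN iffD1, rotated]) (auto simp: f_def a_def)
      have "bij_betw (\<lambda>i. fb (i - a)) {a..<a+b} B"
      proof -
        have "bij_betw (\<lambda>i. i - a) {a..<a+b} {0..<b}"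
          by (rule bij_betwI[where g="\<lambda>i. i + a"]) auto
        from bij_betw_trans[OF this] fb show ?thesis unfolding b_def by (simp add: comp_def)
      qed
      thus "bij_betw f {a..<a+b} B"
        by (rule bij_betw_cong[THEN iffD1, rotated]) (auto simp: f_def)
    qed
    moreover have "{0..<a} \<union> {a..<a+b} = {0..<a+b}" by auto
    ultimately show ?thesis by simp
  qed
  have "tm f (a+b) M = four_block_mat (tm fa a M) (0\<^sub>m a b) (mat b a (\<lambda>(i,j). M (fb i) (fa j))) (tm fb b M)"
  proof (rule eq_matI)
    fix i j assume ij: "i < dim_row (four_block_mat (tm fa a M) (0\<^sub>m a b) (mat b a (\<lambda>(i,j). M (fb i) (fa j))) (tm fb b M))"
      "j < dim_col (four_block_mat (tm fa a M) (0\<^sub>m a b) (mat b a (\<lambda>(i,j). M (fb i) (fa j))) (tm fb b M))"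
    hence ij': "i < a + b" "j < a + b" by (auto simp: tm_def)
    show "tm f (a+b) M $$ (i,j) = four_block_mat (tm fa a M) (0\<^sub>m a b) (mat b a (\<lambda>(i,j). M (fb i) (fa j))) (tm fb b M) $$ (i,j)"
    proof -
      have "i < a \<Longrightarrow> \<not> j < a \<Longrightarrow> M (fa i) (fb (j - a)) = 0"
        using ij' bij_betwE[OF fa] bij_betwE[OF fb] z unfolding a_def b_def by auto
      thus ?thesis using ij' by (auto simp: tm_def f_def)
    qed
  qed (auto simp: tm_def)
  hence "det (tm f (a+b) M) = det (tm fa a M) * det (tm fb b M)"
    by (simp add: det_four_block_mat_upper_right_zero[of _ a _ b])
  thus ?thesis
    using det_on_tm[OF fbij] det_on_tm[OF fa[folded a_def]] det_on_tm[OF fb[folded b_def]] by simp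
qed



lemma lookup_le_mdeg: "Poly_Mapping.lookup \<beta> a \<le> mdeg (\<beta>::('n::finite) mi)"
  unfolding mdeg_def by (rule member_le_sum) auto

lemma finite_deg_le: "finite {\<beta>::('n::finite) mi. mdeg \<beta> \<le> d}"
proof -
  have sub: "Poly_Mapping.lookup ` {\<beta>::'n mi. mdeg \<beta> \<le> d} \<subseteq> PiE UNIV (\<lambda>_. {..d})"
  proof
    fix g assume "g \<in> Poly_Mapping.lookup ` {\<beta>::'n mi. mdeg \<beta> \<le> d}"
    then obtain \<beta> :: "'n mi" where b: "mdeg \<beta> \<le> d" "g = Poly_Mapping.lookup \<beta>" by blast
    have "\<forall>a. g a \<le> d" using b lookup_le_mdeg[of \<beta>] order_trans by blast
    thus "g \<in> PiE UNIV (\<lambda>_. {..d})" by (simp add: PiE_iff)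
  qed
  have fin: "finite (PiE (UNIV::'n set) (\<lambda>_. {..d}))" by (rule finite_PiE) auto
  have "finite (Poly_Mapping.lookup ` {\<beta>::'n mi. mdeg \<beta> \<le> d})" by (rule finite_subset[OF sub fin])
  moreover have "inj_on Poly_Mapping.lookup {\<beta>::'n mi. mdeg \<beta> \<le> d}"
    by (rule inj_onI) (rule poly_mapping_eqI, simp)
  ultimately show ?thesis by (rule finite_imageD)
qed

lemma finite_trunc[simp]: "finite (trunc_idx k :: ('n::finite) mi set)"
  unfolding trunc_idx_def by (rule finite_subset[OF _ finite_deg_le[of k]]) auto

lemma finite_block[simp]: "finite (block_idx k :: ('n::finite) mi set)"
  unfolding block_idx_def by (rule finite_subset[OF _ finite_deg_le[of k]]) auto

definition lowr :: "('n::finite) smat \<Rightarrow> bool" where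
  "lowr A \<longleftrightarrow> (\<forall>\<alpha> \<beta>. mdeg \<alpha> < mdeg \<beta> \<longrightarrow> A \<alpha> \<beta> = 0)"

lemma det_on_lowr:
  assumes "lowr A"
  shows "det_on (trunc_idx k) A = (\<Prod>l<k. det_on (block_idx l) A)"
proof (induction k)
  case 0
  have "trunc_idx 0 = ({} :: 'a mi set)" by (simp add: trunc_idx_def)
  thus ?case by (simp add: det_on_empty)
next
  case (Suc k)
  have e: "trunc_idx (Suc k) = trunc_idx k \<union> block_idx k"
    by (auto simp: trunc_idx_def block_idx_def)
  have d: "trunc_idx k \<inter> block_idx k = {}" by (auto simp: trunc_idx_def block_idx_def)
  have z: "A i j = 0" if "i \<in> trunc_idx k" "j \<in> block_idx k" for i j
    using assms that unfolding lowr_def trunc_idx_def block_idx_def by simp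
  have "det_on (trunc_idx (Suc k)) A = det_on (trunc_idx k) A * det_on (block_idx k) A"
    unfolding e by (rule det_on_split[OF finite_trunc finite_block d z])
  thus ?case using Suc by simp
qed

definition rf :: "'n smat \<Rightarrow> bool" where
  "rf A \<longleftrightarrow> (\<forall>i. finite {l. A i l \<noteq> 0})"

lemma lowr_supp_le:
  assumes "lowr A" shows "{l. A i l \<noteq> 0} \<subseteq> {l. mdeg l \<le> mdeg i}"
proof
  fix l assume l: "l \<in> {l. A i l \<noteq> 0}"
  have "\<not> mdeg i < mdeg l"
  proof
    assume "mdeg i < mdeg l"
    hence "A i l = 0" using assms unfolding lowr_def by simp
    thus False using l by simp
  qed
  thus "l \<in> {l. mdeg l \<le> mdeg i}" by simp
qed

lemma lowr_rf: assumes "lowr A" shows "rf A"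
  unfolding rf_def by (rule allI, rule finite_subset[OF lowr_supp_le[OF assms] finite_deg_le])

lemma lowr_supp: assumes "lowr A" "i \<in> trunc_idx k" shows "{l. A i l \<noteq> 0} \<subseteq> trunc_idx k"
proof
  fix l assume "l \<in> {l. A i l \<noteq> 0}"
  hence "mdeg l \<le> mdeg i" using lowr_supp_le[OF assms(1)] by blast
  thus "l \<in> trunc_idx k" using assms(2) unfolding trunc_idx_def by simp
qed

lemma mmult_sum:
  assumes "finite F" "{l. A i l \<noteq> 0} \<subseteq> F"
  shows "mmult A B i j = (\<Sum>l\<in>F. A i l * B l j)"
  unfolding mmult_def by (rule sum.mono_neutral_left) (use assms in auto)

lemma rf_mmult:
  assumes "rf A" "rf B" shows "rf (mmult A B)"
  unfolding rf_def
proof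
  fix i
  have "{m. mmult A B i m \<noteq> 0} \<subseteq> (\<Union>l\<in>{l. A i l \<noteq> 0}. {m. B l m \<noteq> 0})"
  proof
    fix m assume "m \<in> {m. mmult A B i m \<noteq> 0}"
    hence "(\<Sum>l\<in>{l. A i l \<noteq> 0}. A i l * B l m) \<noteq> 0" by (simp add: mmult_def)
    then obtain l where "l \<in> {l. A i l \<noteq> 0}" "A i l * B l m \<noteq> 0" by (rule sum.not_neutral_contains_not_neutral)
    thus "m \<in> (\<Union>l\<in>{l. A i l \<noteq> 0}. {m. B l m \<noteq> 0})" by auto
  qed
  moreover have "finite (\<Union>l\<in>{l. A i l \<noteq> 0}. {m. B l m \<noteq> 0})"
    using assms unfolding rf_def by auto
  ultimately show "finite {m. mmult A B i m \<noteq> 0}" by (rule finite_subset)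
qed

lemma mmult_assoc:
  assumes A: "rf A" and B: "rf B"
  shows "mmult (mmult A B) C = mmult A (mmult B C)"
proof (intro ext)
  fix i j
  define SA where "SA = {l. A i l \<noteq> 0}"
  define F where "F = (\<Union>l\<in>SA. {m. B l m \<noteq> 0})"
  have fSA: "finite SA" using A by (simp add: rf_def SA_def)
  have fF: "finite F" using A B by (auto simp: rf_def F_def SA_def)
  have supp: "{m. mmult A B i m \<noteq> 0} \<subseteq> F"
  proof
    fix m assume "m \<in> {m. mmult A B i m \<noteq> 0}"
    hence "(\<Sum>l\<in>SA. A i l * B l m) \<noteq> 0" by (simp add: mmult_def SA_def)
    then obtain l where "l \<in> SA" "A i l * B l m \<noteq> 0" by (rule sum.not_neutral_contains_not_neutral)
    thus "m \<in> F" by (auto simp: F_def)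
  qed
  have "mmult (mmult A B) C i j = (\<Sum>m\<in>F. mmult A B i m * C m j)"
    by (rule mmult_sum[of F "mmult A B" i, OF fF supp])
  also have "\<dots> = (\<Sum>m\<in>F. (\<Sum>l\<in>SA. A i l * B l m) * C m j)"
    by (simp add: mmult_def SA_def)
  also have "\<dots> = (\<Sum>m\<in>F. \<Sum>l\<in>SA. A i l * B l m * C m j)" by (simp add: sum_distrib_right)
  also have "\<dots> = (\<Sum>l\<in>SA. \<Sum>m\<in>F. A i l * B l m * C m j)" by (rule sum.swap)
  also have "\<dots> = (\<Sum>l\<in>SA. A i l * (\<Sum>m\<in>F. B l m * C m j))" by (simp add: sum_distrib_left mult.assoc)
  also have "\<dots> = (\<Sum>l\<in>SA. A i l * mmult B C l j)"
    by (rule sum.cong[OF refl], subst mmult_sum[OF fF], auto simp: F_def)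
  also have "\<dots> = mmult A (mmult B C) i j" by (simp add: mmult_def SA_def)
  finally show "mmult (mmult A B) C i j = mmult A (mmult B C) i j" .
qed

lemma mmult_ident_left[simp]: "mmult mident A = A"
proof (intro ext)
  fix i j :: "'a mi"
  have "{l. mident i l \<noteq> (0::complex)} = {i}" by (auto simp: mident_def)
  thus "mmult mident A i j = A i j" by (simp add: mmult_def mident_def)
qed

lemma mmult_ident_right:
  assumes "rf A" shows "mmult A mident = A"
proof (intro ext)
  fix i j
  have "mmult A mident i j = (\<Sum>l\<in>insert j {l. A i l \<noteq> 0}. A i l * mident l j)"
    by (rule mmult_sum) (use assms in \<open>auto simp: rf_def\<close>)
  also have "\<dots> = A i j" using assms
    by (subst sum.remove[of _ j]) (auto simp: rf_def mident_def intro!: sum.neutral)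
  finally show "mmult A mident i j = A i j" .
qed

lemma rf_mident[simp]: "rf (mident :: 'a smat)"
proof -
  have e: "{l. mident i l \<noteq> (0::complex)} = {i}" for i :: "'a mi" by (auto simp: mident_def)
  show ?thesis unfolding rf_def e by simp
qed

lemma lowr_mmult: "lowr A \<Longrightarrow> lowr B \<Longrightarrow> lowr (mmult A (B::('n::finite) smat))"
  unfolding lowr_def mmult_def
proof (intro allI impI sum.neutral ballI)
  fix \<alpha> \<beta> l :: "'n mi" assume AB: "\<forall>\<alpha> \<beta>. mdeg \<alpha> < mdeg \<beta> \<longrightarrow> A \<alpha> \<beta> = 0" "\<forall>\<alpha> \<beta>. mdeg \<alpha> < mdeg \<beta> \<longrightarrow> B \<alpha> \<beta> = 0"
    and d: "mdeg \<alpha> < mdeg \<beta>" and l: "l \<in> {l. A \<alpha> l \<noteq> 0}"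
  have "mdeg l \<le> mdeg \<alpha>" using AB(1) l not_less by blast
  hence "B l \<beta> = 0" using AB(2) d by simp
  thus "A \<alpha> l * B l \<beta> = 0" by simp
qed



definition Sh :: "'n mi \<Rightarrow> 'n smat" where
  "Sh \<alpha> \<gamma> \<epsilon> = (if \<epsilon> = \<gamma> + \<alpha> then 1 else 0)"

lemma spectral_Sh: "spectral a = Sh (Poly_Mapping.single a 1)"
  by (intro ext) (simp add: spectral_def Sh_def)

lemma Sh_supp: "{l. Sh \<alpha> \<gamma> l \<noteq> 0} = {\<gamma> + \<alpha>}"
  by (auto simp: Sh_def)

lemma rf_Sh[simp]: "rf (Sh \<alpha>)"
  by (simp add: rf_def Sh_supp)

lemma mmult_Sh: "mmult (Sh \<alpha>) B \<gamma> j = B (\<gamma> + \<alpha>) j"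
  by (simp add: mmult_def Sh_supp) (simp add: Sh_def)

lemma Sh_mult: "mmult (Sh \<alpha>) (Sh \<beta>) = Sh (\<alpha> + \<beta>)"
  by (intro ext) (simp add: mmult_Sh Sh_def add.assoc)

lemma Sh_0: "Sh 0 = mident"
  by (intro ext) (auto simp: Sh_def mident_def)

lemma mpow_spectral: "mpow (spectral a) n = Sh (Poly_Mapping.single a n)"
proof (induction n)
  case 0 thus ?case by (simp add: Sh_0)
next
  case (Suc n)
  have "Poly_Mapping.single a 1 + Poly_Mapping.single a n = Poly_Mapping.single a (Suc n)"
    by (simp add: single_add[symmetric])
  thus ?case using Suc by (simp add: spectral_Sh Sh_mult)
qed

lemma foldr_Sh:
  "foldr (\<lambda>a M. mmult (mpow (spectral a) (Poly_Mapping.lookup \<alpha> a)) M) as mident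
     = Sh (sum_list (map (\<lambda>a. Poly_Mapping.single a (Poly_Mapping.lookup \<alpha> a)) as))"
  by (induction as) (simp_all add: Sh_0 mpow_spectral Sh_mult)

lemma sum_single_lookup: "(\<Sum>a\<in>(UNIV::('n::finite) set). Poly_Mapping.single a (Poly_Mapping.lookup \<alpha> a)) = \<alpha>"
  by (rule poly_mapping_eqI) (simp add: lookup_sum lookup_single when_def)

lemma mat_monom_spectral: "mat_monom spectral (\<alpha>::('n::{finite,linorder}) mi) = Sh \<alpha>"
proof -
  have "sum_list (map (\<lambda>a. Poly_Mapping.single a (Poly_Mapping.lookup \<alpha> a)) (sorted_list_of_set (UNIV::'n set)))
      = (\<Sum>a\<in>UNIV. Poly_Mapping.single a (Poly_Mapping.lookup \<alpha> a))"
    by (subst sum_list_distinct_conv_sum_set) auto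
  thus ?thesis unfolding mat_monom_def foldr_Sh by (simp add: sum_single_lookup)
qed

definition cnj :: "'n smat \<Rightarrow> 'n smat \<Rightarrow> 'n smat \<Rightarrow> 'n smat" where
  "cnj Sc Scinv X = mmult (mmult Sc X) Scinv"

lemma rf_mpow: "rf A \<Longrightarrow> rf (mpow A n)"
  by (induction n) (auto intro: rf_mmult)

lemma rf_conj: "rf Sc \<Longrightarrow> rf Scinv \<Longrightarrow> rf X \<Longrightarrow> rf (cnj Sc Scinv X)"
  unfolding cnj_def by (intro rf_mmult)

lemma conj_mult:
  assumes Sc: "rf Sc" "rf Scinv" "mmult Scinv Sc = mident" and A: "rf A" and B: "rf B"
  shows "mmult (cnj Sc Scinv A) (cnj Sc Scinv B) = cnj Sc Scinv (mmult A B)"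
proof -
  have rSA: "rf (mmult Sc A)" using Sc A by (intro rf_mmult)
  have rSB: "rf (mmult Sc B)" using Sc B by (intro rf_mmult)
  have "mmult Scinv (mmult (mmult Sc B) Scinv) = mmult (mmult Scinv (mmult Sc B)) Scinv"
    by (rule mmult_assoc[symmetric, OF Sc(2) rSB])
  also have "mmult Scinv (mmult Sc B) = B"
    using mmult_assoc[OF Sc(2) Sc(1), of B] Sc(3) by simp
  finally have e: "mmult Scinv (mmult (mmult Sc B) Scinv) = mmult B Scinv" .
  have "mmult (cnj Sc Scinv A) (cnj Sc Scinv B) = mmult (mmult Sc A) (mmult Scinv (mmult (mmult Sc B) Scinv))"
    unfolding cnj_def by (rule mmult_assoc[OF rSA Sc(2)])
  also have "\<dots> = mmult (mmult Sc A) (mmult B Scinv)" by (simp only: e)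
  also have "\<dots> = mmult (mmult (mmult Sc A) B) Scinv" by (rule mmult_assoc[symmetric, OF rSA B])
  also have "\<dots> = cnj Sc Scinv (mmult A B)" unfolding cnj_def by (simp only: mmult_assoc[OF Sc(1) A])
  finally show ?thesis .
qed

lemma conj_ident:
  assumes "rf Sc" "mmult Sc Scinv = mident"
  shows "cnj Sc Scinv mident = mident"
  unfolding cnj_def using assms by (simp add: mmult_ident_right)

lemma conj_mpow:
  assumes Sc: "rf Sc" "rf Scinv" "mmult Scinv Sc = mident" "mmult Sc Scinv = mident" and A: "rf A"
  shows "mpow (cnj Sc Scinv A) n = cnj Sc Scinv (mpow A n)"
proof (induction n)
  case 0 thus ?case using conj_ident[OF Sc(1,4)] by simp
next
  case (Suc n)
  thus ?case using conj_mult[OF Sc(1-3) A rf_mpow[OF A]] by simp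
qed

lemma conj_foldr:
  assumes Sc: "rf Sc" "rf Scinv" "mmult Scinv Sc = mident" "mmult Sc Scinv = mident" and L: "\<And>a. rf (L a)"
  shows "foldr (\<lambda>a M. mmult (mpow (cnj Sc Scinv (L a)) (n a)) M) as mident
       = cnj Sc Scinv (foldr (\<lambda>a M. mmult (mpow (L a) (n a)) M) as mident)
     \<and> rf (foldr (\<lambda>a M. mmult (mpow (L a) (n a)) M) as mident)"
proof (induction as)
  case Nil thus ?case using conj_ident[OF Sc(1,4)] by simp
next
  case (Cons a as)
  have r: "rf (mpow (L a) (n a))" using L rf_mpow by blast
  show ?case using Cons conj_mpow[OF Sc L] conj_mult[OF Sc(1-3) r]
    by (simp add: rf_mmult r)
qed



lemma lin_zero: "lin_functional u \<Longrightarrow> u 0 = 0"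
proof -
  assume "lin_functional u"
  hence "u (0 + 0) = u 0 + u 0" unfolding lin_functional_def by blast
  thus "u 0 = 0" by simp
qed

lemma lin_sum: "lin_functional u \<Longrightarrow> u (\<Sum>x\<in>A. f x) = (\<Sum>x\<in>A. u (f x))"
  by (induction A rule: infinite_finite_induct) (auto simp: lin_zero lin_functional_def)

lemma poly_expand: "(\<Sum>a\<in>Poly_Mapping.keys Q. Poly_Mapping.single a (Poly_Mapping.lookup Q a)) = Q"
  by (rule poly_mapping_eqI) (auto simp: lookup_sum lookup_single when_def in_keys_iff)

lemma mom_shift:
  assumes lin: "lin_functional uc" and modif: "\<forall>P. uc (Q2 * P) = u P"
  shows "(\<Sum>\<alpha>\<in>Poly_Mapping.keys Q2. Poly_Mapping.lookup Q2 \<alpha> * moment_matrix uc (\<gamma> + \<alpha>) \<delta>) = moment_matrix u \<gamma> \<delta>"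
proof -
  have "(\<Sum>\<alpha>\<in>Poly_Mapping.keys Q2. Poly_Mapping.lookup Q2 \<alpha> * moment_matrix uc (\<gamma> + \<alpha>) \<delta>)
      = uc (\<Sum>\<alpha>\<in>Poly_Mapping.keys Q2. cscale (Poly_Mapping.lookup Q2 \<alpha>) (monomial (\<gamma> + \<alpha>) * monomial \<delta>))"
    using lin by (simp add: lin_sum moment_matrix_def lin_functional_def)
  also have "(\<Sum>\<alpha>\<in>Poly_Mapping.keys Q2. cscale (Poly_Mapping.lookup Q2 \<alpha>) (monomial (\<gamma> + \<alpha>) * monomial \<delta>))
      = (\<Sum>\<alpha>\<in>Poly_Mapping.keys Q2. Poly_Mapping.single \<alpha> (Poly_Mapping.lookup Q2 \<alpha>)) * (monomial \<gamma> * monomial \<delta>)"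
    unfolding sum_distrib_right
    by (rule sum.cong[OF refl]) (simp add: cscale_def monomial_def mult_single ac_simps)
  also have "\<dots> = Q2 * (monomial \<gamma> * monomial \<delta>)" by (simp only: poly_expand)
  finally show ?thesis using modif by (simp add: moment_matrix_def)
qed



lemma mmult_lin:
  "mmult A (\<lambda>\<gamma> j. \<Sum>\<alpha>\<in>K. c \<alpha> * X \<alpha> \<gamma> j) i j = (\<Sum>\<alpha>\<in>K. c \<alpha> * mmult A (X \<alpha>) i j)"
proof -
  have "mmult A (\<lambda>\<gamma> j. \<Sum>\<alpha>\<in>K. c \<alpha> * X \<alpha> \<gamma> j) i j
      = (\<Sum>l\<in>{l. A i l \<noteq> 0}. \<Sum>\<alpha>\<in>K. c \<alpha> * (A i l * X \<alpha> l j))"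
    unfolding mmult_def by (simp add: sum_distrib_left ac_simps)
  also have "\<dots> = (\<Sum>\<alpha>\<in>K. \<Sum>l\<in>{l. A i l \<noteq> 0}. c \<alpha> * (A i l * X \<alpha> l j))" by (rule sum.swap)
  also have "\<dots> = (\<Sum>\<alpha>\<in>K. c \<alpha> * mmult A (X \<alpha>) i j)"
    unfolding mmult_def by (simp add: sum_distrib_left)
  finally show ?thesis .
qed

lemma Gc_col:
  assumes F: "finite F" "{\<delta>. Sc \<beta> \<delta> \<noteq> 0} \<subseteq> F" and inv: "mmult Sc Scinv = mident" and X: "rf X"
  shows "X \<gamma> \<beta> = (\<Sum>\<delta>\<in>F. mmult X (mtrans Scinv) \<gamma> \<delta> * Sc \<beta> \<delta>)"
proof -
  define E where "E = {l. X \<gamma> l \<noteq> 0}"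
  have fE: "finite E" using X by (simp add: rf_def E_def)
  have "(\<Sum>\<delta>\<in>F. mmult X (mtrans Scinv) \<gamma> \<delta> * Sc \<beta> \<delta>)
      = (\<Sum>\<delta>\<in>F. \<Sum>\<epsilon>\<in>E. X \<gamma> \<epsilon> * (Sc \<beta> \<delta> * Scinv \<delta> \<epsilon>))"
    unfolding mmult_def mtrans_def E_def by (simp add: sum_distrib_right sum_distrib_left ac_simps)
  also have "\<dots> = (\<Sum>\<epsilon>\<in>E. \<Sum>\<delta>\<in>F. X \<gamma> \<epsilon> * (Sc \<beta> \<delta> * Scinv \<delta> \<epsilon>))" by (rule sum.swap)
  also have "\<dots> = (\<Sum>\<epsilon>\<in>E. X \<gamma> \<epsilon> * mmult Sc Scinv \<beta> \<epsilon>)"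
    by (simp add: sum_distrib_left[symmetric] mmult_sum[of F Sc \<beta>, OF F])
  also have "\<dots> = (\<Sum>\<epsilon>\<in>E. if \<epsilon> = \<beta> then X \<gamma> \<epsilon> else 0)"
    by (intro sum.cong refl) (auto simp: inv mident_def)
  also have "\<dots> = X \<gamma> \<beta>" using fE by (simp add: E_def)
  finally show ?thesis by simp
qed

lemma det_on_unit:
  assumes "block_lower_unitriangular A"
  shows "det_on (trunc_idx k) (A::('n::finite) smat) = 1"
proof -
  have l: "lowr A" using assms by (auto simp: block_lower_unitriangular_def lowr_def)
  have "det_on (block_idx l) A = 1" for l
  proof -
    have "det_on (block_idx l) A = det_on (block_idx l) (mident :: 'n smat)"
      by (rule det_on_cong[OF finite_block]) (use assms in \<open>auto simp: block_lower_unitriangular_def block_idx_def\<close>)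
    thus ?thesis by (simp add: det_on_ident)
  qed
  thus ?thesis by (simp add: det_on_lowr[OF l])
qed

theorem mainTheorem1:
  fixes u uc :: "('n::{finite,linorder}) mpoly \<Rightarrow> complex"
    and Q2 :: "'n mpoly"
    and S Sinv H Sc Scinv Hc :: "'n smat"
    and k :: nat
  assumes lin_u: "lin_functional u"
    and lin_uc: "lin_functional uc"
    and modif: "\<forall>P. uc (Q2 * P) = u P"
    and qd_u: "quasi_definite u"
    and qd_uc: "quasi_definite uc"
    and S: "block_lower_unitriangular S" "block_lower_unitriangular Sinv"
           "mmult S Sinv = mident" "mmult Sinv S = mident"
    and H: "block_diagonal H"
    and G: "moment_matrix u = mmult (mmult Sinv H) (mtrans Sinv)"
    and Sc: "block_lower_unitriangular Sc" "block_lower_unitriangular Scinv"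
           "mmult Sc Scinv = mident" "mmult Scinv Sc = mident"
    and Hc: "block_diagonal Hc"
    and Gc: "moment_matrix uc = mmult (mmult Scinv Hc) (mtrans Scinv)"
    and k: "k \<ge> 1"
  shows "det_on (trunc_idx k) (mat_poly_eval Q2 (jacobi Sc Scinv))
           = (\<Prod>l<k. det_on (block_idx l) H / det_on (block_idx l) Hc)
         \<and> det_on (trunc_idx k) (mat_poly_eval Q2 (jacobi Sc Scinv)) \<noteq> 0"
proof -
  define I where "I = (trunc_idx k :: 'n mi set)"
  define M where "M = mat_poly_eval Q2 (jacobi Sc Scinv)"
  define P where "P \<gamma> \<epsilon> = (\<Sum>\<alpha>\<in>Poly_Mapping.keys Q2. Poly_Mapping.lookup Q2 \<alpha> * Sh \<alpha> \<gamma> \<epsilon>)" for \<gamma> \<epsilon>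
  have fI: "finite I" by (simp add: I_def)
  have lS: "lowr S" "lowr Sinv" "lowr Sc" "lowr Scinv"
    using S Sc by (auto simp: block_lower_unitriangular_def lowr_def)
  have lH: "lowr H" "lowr Hc" using H Hc by (auto simp: block_diagonal_def lowr_def)
  have rS: "rf S" "rf Sinv" "rf Sc" "rf Scinv" "rf H" "rf Hc" using lS lH by (auto intro: lowr_rf)
  have P_supp: "{\<epsilon>. P \<gamma> \<epsilon> \<noteq> 0} \<subseteq> (\<lambda>\<alpha>. \<gamma> + \<alpha>) ` Poly_Mapping.keys Q2" for \<gamma>
  proof
    fix \<epsilon> assume "\<epsilon> \<in> {\<epsilon>. P \<gamma> \<epsilon> \<noteq> 0}"
    hence "(\<Sum>\<alpha>\<in>Poly_Mapping.keys Q2. Poly_Mapping.lookup Q2 \<alpha> * Sh \<alpha> \<gamma> \<epsilon>) \<noteq> 0" by (simp add: P_def)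
    then obtain \<alpha> where "\<alpha> \<in> Poly_Mapping.keys Q2" "Poly_Mapping.lookup Q2 \<alpha> * Sh \<alpha> \<gamma> \<epsilon> \<noteq> 0"
      by (rule sum.not_neutral_contains_not_neutral)
    thus "\<epsilon> \<in> (\<lambda>\<alpha>. \<gamma> + \<alpha>) ` Poly_Mapping.keys Q2" by (auto simp: Sh_def split: if_splits)
  qed
  have rfP: "rf P" unfolding rf_def using P_supp by (meson finite_imageI finite_keys finite_subset)
  have mmult_P: "mmult P B \<gamma> j = (\<Sum>\<alpha>\<in>Poly_Mapping.keys Q2. Poly_Mapping.lookup Q2 \<alpha> * B (\<gamma> + \<alpha>) j)" for B \<gamma> j
  proof -
    let ?F = "(\<lambda>\<alpha>. \<gamma> + \<alpha>) ` Poly_Mapping.keys Q2"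
    have "mmult P B \<gamma> j = (\<Sum>\<epsilon>\<in>?F. P \<gamma> \<epsilon> * B \<epsilon> j)"
      by (rule mmult_sum[OF _ P_supp]) simp
    also have "\<dots> = (\<Sum>\<epsilon>\<in>?F. \<Sum>\<alpha>\<in>Poly_Mapping.keys Q2. Poly_Mapping.lookup Q2 \<alpha> * (Sh \<alpha> \<gamma> \<epsilon> * B \<epsilon> j))"
      by (simp add: P_def sum_distrib_right sum_distrib_left ac_simps)
    also have "\<dots> = (\<Sum>\<alpha>\<in>Poly_Mapping.keys Q2. \<Sum>\<epsilon>\<in>?F. Poly_Mapping.lookup Q2 \<alpha> * (Sh \<alpha> \<gamma> \<epsilon> * B \<epsilon> j))"
      by (rule sum.swap)
    also have "\<dots> = (\<Sum>\<alpha>\<in>Poly_Mapping.keys Q2. Poly_Mapping.lookup Q2 \<alpha> * B (\<gamma> + \<alpha>) j)"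
    proof (rule sum.cong[OF refl])
      fix \<alpha> assume a: "\<alpha> \<in> Poly_Mapping.keys Q2"
      have "(\<Sum>\<epsilon>\<in>?F. Poly_Mapping.lookup Q2 \<alpha> * (Sh \<alpha> \<gamma> \<epsilon> * B \<epsilon> j))
          = (\<Sum>\<epsilon>\<in>?F. if \<epsilon> = \<gamma> + \<alpha> then Poly_Mapping.lookup Q2 \<alpha> * B \<epsilon> j else 0)"
        by (intro sum.cong refl) (simp add: Sh_def)
      also have "\<dots> = Poly_Mapping.lookup Q2 \<alpha> * B (\<gamma> + \<alpha>) j" using a by simp
      finally show "(\<Sum>\<epsilon>\<in>?F. Poly_Mapping.lookup Q2 \<alpha> * (Sh \<alpha> \<gamma> \<epsilon> * B \<epsilon> j)) = Poly_Mapping.lookup Q2 \<alpha> * B (\<gamma> + \<alpha>) j" .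
    qed
    finally show ?thesis .
  qed
  have jac: "jacobi Sc Scinv = (\<lambda>a. cnj Sc Scinv (spectral a))"
    by (intro ext) (simp add: jacobi_def cnj_def)
  have monJ: "mat_monom (jacobi Sc Scinv) \<alpha> = cnj Sc Scinv (Sh \<alpha>)" for \<alpha>
  proof -
    have "mat_monom (jacobi Sc Scinv) \<alpha> = cnj Sc Scinv (mat_monom spectral \<alpha>)"
      unfolding mat_monom_def jac
      using conj_foldr[OF rS(3,4) Sc(4,3), of spectral "Poly_Mapping.lookup \<alpha>"] by (simp add: spectral_Sh)
    thus ?thesis by (simp add: mat_monom_spectral)
  qed
  have M_eq: "M = cnj Sc Scinv P"
  proof (intro ext)
    fix i j
    have "M i j = (\<Sum>\<alpha>\<in>Poly_Mapping.keys Q2. Poly_Mapping.lookup Q2 \<alpha> * mmult Sc (mmult (Sh \<alpha>) Scinv) i j)"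
      unfolding M_def mat_poly_eval_def monJ cnj_def by (simp add: mmult_assoc[OF rS(3) rf_Sh])
    also have "\<dots> = mmult Sc (\<lambda>\<gamma> j. \<Sum>\<alpha>\<in>Poly_Mapping.keys Q2. Poly_Mapping.lookup Q2 \<alpha> * mmult (Sh \<alpha>) Scinv \<gamma> j) i j"
      by (rule mmult_lin[symmetric])
    also have "(\<lambda>\<gamma> j. \<Sum>\<alpha>\<in>Poly_Mapping.keys Q2. Poly_Mapping.lookup Q2 \<alpha> * mmult (Sh \<alpha>) Scinv \<gamma> j) = mmult P Scinv"
      by (intro ext) (simp add: mmult_P mmult_Sh)
    also have "mmult Sc (mmult P Scinv) = cnj Sc Scinv P"
      unfolding cnj_def by (rule mmult_assoc[symmetric, OF rS(3) rfP])
    finally show "M i j = cnj Sc Scinv P i j" .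
  qed
  have rfM: "rf M" unfolding M_eq by (rule rf_conj[OF rS(3,4) rfP])
  have Gc_ent: "mmult Scinv Hc \<gamma> \<beta> = (\<Sum>\<delta>\<in>I. moment_matrix uc \<gamma> \<delta> * Sc \<beta> \<delta>)" if "\<beta> \<in> I" for \<gamma> \<beta>
    unfolding Gc by (rule Gc_col[OF fI _ Sc(3) rf_mmult[OF rS(4,6)]]) (use lowr_supp[OF lS(3) that[unfolded I_def]] in \<open>simp add: I_def\<close>)
  have E1: "(\<Sum>l\<in>I. M i l * Hc l j) = (\<Sum>\<gamma>\<in>I. Sc i \<gamma> * (\<Sum>\<delta>\<in>I. moment_matrix u \<gamma> \<delta> * Sc j \<delta>))"
    if ij: "i \<in> I" "j \<in> I" for i j
  proof -
    have "(\<Sum>l\<in>I. M i l * Hc l j) = (\<Sum>l\<in>{l. M i l \<noteq> 0} \<union> I. M i l * Hc l j)"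
    proof (rule sum.mono_neutral_left)
      show "finite ({l. M i l \<noteq> 0} \<union> I)" using rfM fI by (simp add: rf_def)
      show "\<forall>l\<in>{l. M i l \<noteq> 0} \<union> I - I. M i l * Hc l j = 0"
        using ij Hc by (auto simp: I_def trunc_idx_def block_diagonal_def)
    qed auto
    also have "\<dots> = mmult M Hc i j"
      by (rule mmult_sum[symmetric]) (use rfM fI in \<open>auto simp: rf_def\<close>)
    also have "mmult M Hc = mmult Sc (mmult P (mmult Scinv Hc))"
      unfolding M_eq cnj_def
      by (simp add: mmult_assoc rf_mmult rS rfP)
    also have "mmult Sc (mmult P (mmult Scinv Hc)) i j = (\<Sum>\<gamma>\<in>I. Sc i \<gamma> * mmult P (mmult Scinv Hc) \<gamma> j)"
      by (rule mmult_sum[OF fI]) (use lowr_supp[OF lS(3)] ij in \<open>simp add: I_def\<close>)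
    also have "\<dots> = (\<Sum>\<gamma>\<in>I. Sc i \<gamma> * (\<Sum>\<delta>\<in>I. moment_matrix u \<gamma> \<delta> * Sc j \<delta>))"
    proof (rule sum.cong[OF refl])
      fix \<gamma>
      have "mmult P (mmult Scinv Hc) \<gamma> j
          = (\<Sum>\<alpha>\<in>Poly_Mapping.keys Q2. Poly_Mapping.lookup Q2 \<alpha> * (\<Sum>\<delta>\<in>I. moment_matrix uc (\<gamma> + \<alpha>) \<delta> * Sc j \<delta>))"
        by (simp add: mmult_P Gc_ent[OF ij(2)])
      also have "\<dots> = (\<Sum>\<alpha>\<in>Poly_Mapping.keys Q2. \<Sum>\<delta>\<in>I. Poly_Mapping.lookup Q2 \<alpha> * moment_matrix uc (\<gamma> + \<alpha>) \<delta> * Sc j \<delta>)"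
        by (simp add: sum_distrib_left ac_simps)
      also have "\<dots> = (\<Sum>\<delta>\<in>I. \<Sum>\<alpha>\<in>Poly_Mapping.keys Q2. Poly_Mapping.lookup Q2 \<alpha> * moment_matrix uc (\<gamma> + \<alpha>) \<delta> * Sc j \<delta>)"
        by (rule sum.swap)
      also have "\<dots> = (\<Sum>\<delta>\<in>I. moment_matrix u \<gamma> \<delta> * Sc j \<delta>)"
        by (simp add: sum_distrib_right[symmetric] mom_shift[OF lin_uc modif])
      finally show "Sc i \<gamma> * mmult P (mmult Scinv Hc) \<gamma> j = Sc i \<gamma> * (\<Sum>\<delta>\<in>I. moment_matrix u \<gamma> \<delta> * Sc j \<delta>)" by simp
    qed
    finally show ?thesis .
  qed
  have Gform: "det_on I (moment_matrix u') = det_on I Hh"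
    if l: "block_lower_unitriangular Si" "lowr Hh" and e: "moment_matrix u' = mmult (mmult Si Hh) (mtrans Si)"
    for u' :: "'n mpoly \<Rightarrow> complex" and Si Hh :: "'n smat"
  proof -
    have lSi: "lowr Si" using l(1) by (auto simp: block_lower_unitriangular_def lowr_def)
    have lSH: "lowr (mmult Si Hh)" using lSi l(2) by (rule lowr_mmult)
    define X where "X = (\<lambda>\<gamma> l. \<Sum>m\<in>I. Si \<gamma> m * Hh m l)"
    define T where "T = (\<lambda>l \<delta>. Si \<delta> l)"
    have "det_on I (moment_matrix u') = det_on I (\<lambda>\<gamma> \<delta>. \<Sum>l\<in>I. X \<gamma> l * T l \<delta>)"
    proof (rule det_on_cong[OF fI])
      fix \<gamma> \<delta> assume g: "\<gamma> \<in> I" "\<delta> \<in> I"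
      have "moment_matrix u' \<gamma> \<delta> = (\<Sum>l\<in>I. mmult Si Hh \<gamma> l * Si \<delta> l)"
        unfolding e by (subst mmult_sum[OF fI]) (use lowr_supp[OF lSH] g in \<open>auto simp: I_def mtrans_def\<close>)
      also have "\<dots> = (\<Sum>l\<in>I. X \<gamma> l * T l \<delta>)"
        unfolding X_def T_def
        by (intro sum.cong refl arg_cong2[where f="(*)"], rule mmult_sum[OF fI])
           (use lowr_supp[OF lSi] g in \<open>auto simp: I_def\<close>)
      finally show "moment_matrix u' \<gamma> \<delta> = (\<Sum>l\<in>I. X \<gamma> l * T l \<delta>)" .
    qed
    also have "\<dots> = det_on I X * det_on I T" by (rule det_on_mult[OF fI])
    also have "det_on I X = det_on I Si * det_on I Hh" unfolding X_def by (rule det_on_mult[OF fI])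
    also have "det_on I T = det_on I Si" unfolding T_def by (rule det_on_transpose[OF fI])
    also have "det_on I Si = 1" unfolding I_def by (rule det_on_unit[OF l(1)])
    finally show ?thesis by simp
  qed
  have dG: "det_on I (moment_matrix u) = det_on I H" by (rule Gform[OF S(2) lH(1) G])
  have dGc: "det_on I (moment_matrix uc) = det_on I Hc" by (rule Gform[OF Sc(2) lH(2) Gc])
  have nz: "det_on I (moment_matrix u) \<noteq> 0" using qd_u k by (simp add: quasi_definite_def I_def)
  have nzc: "det_on I (moment_matrix uc) \<noteq> 0" using qd_uc k by (simp add: quasi_definite_def I_def)
  define Y where "Y = (\<lambda>\<gamma> j. \<Sum>\<delta>\<in>I. moment_matrix u \<gamma> \<delta> * Sc j \<delta>)"
  define T where "T = (\<lambda>\<delta> j. Sc j \<delta>)"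
  have key: "det_on I M * det_on I Hc = det_on I H"
  proof -
    have "det_on I M * det_on I Hc = det_on I (\<lambda>i j. \<Sum>l\<in>I. M i l * Hc l j)"
      by (rule det_on_mult[OF fI, symmetric])
    also have "\<dots> = det_on I (\<lambda>i j. \<Sum>\<gamma>\<in>I. Sc i \<gamma> * Y \<gamma> j)"
      by (rule det_on_cong[OF fI]) (simp add: E1 Y_def)
    also have "\<dots> = det_on I Sc * det_on I Y" by (rule det_on_mult[OF fI])
    also have "det_on I Y = det_on I (moment_matrix u) * det_on I T"
      unfolding Y_def T_def by (rule det_on_mult[OF fI])
    also have "det_on I T = det_on I Sc" unfolding T_def by (rule det_on_transpose[OF fI])
    also have "det_on I Sc = 1" unfolding I_def by (rule det_on_unit[OF Sc(1)])
    finally show ?thesis using dG by simp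
  qed
  have dHc: "det_on I Hc \<noteq> 0" using nzc dGc by simp
  have dH: "det_on I H \<noteq> 0" using nz dG by simp
  have dM: "det_on I M = det_on I H / det_on I Hc" using key dHc by (simp add: field_simps)
  have "det_on I H / det_on I Hc = (\<Prod>l<k. det_on (block_idx l) H / det_on (block_idx l) Hc)"
    unfolding I_def det_on_lowr[OF lH(1)] det_on_lowr[OF lH(2)] by (rule prod_dividef[symmetric])
  from trans[OF dM this] have P: "det_on I M = (\<Prod>l<k. det_on (block_idx l) H / det_on (block_idx l) Hc)" .
  have nzM: "det_on I M \<noteq> 0" using dM dH dHc by simp
  show ?thesis using P nzM unfolding M_def I_def by blast
qed


end
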